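(* For a random partition $p$ the following are equivalent: (i) $p$ generates the potential for TU games, i.e., $\sum_{\pi\in\Pi(N)}p_N(\pi)\sum_{B\in\pi}v(B)=\mathrm{Pot}(v)$ for all $N\subseteq\mathbf{U}$ and all TU games $v$ on $N$; (ii) $\sum_{\pi\in\Pi(N):T\in\pi}p_N(\pi)=\frac{(n-t)!(t-1)!}{n!}$ for all $N\subseteq\mathbf{U}$ and nonempty $T\subseteq N$; (iii) for all $N\subseteq\mathbf{U}$, $i\in N$, and nonempty $S\subseteq N\setminus\{i\}$, $$\sum_{\pi\in\Pi((N\setminus\{i\})\setminus S)}p_{N\setminus\{i\}}(\{S\}\cup\pi)=\frac{n}{n-s}\sum_{\pi\in\Pi((N\setminus\{i\})\setminus S)}\sum_{B\in\pi\cup\{\emptyset\}}p_N(\{S\}\cup\pi_{+i\leadsto B}).$$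
   Context: $\mathbf{U}$ is a finite set of players; cardinalities of $N,S,T,B$ are $n,s,t,b$. $\Pi(N)$ is the set of partitions of $N$ ($\Pi(\emptyset)=\{\emptyset\}$). A random partition is a family $p=(p_N)_{N\subseteq\mathbf{U}}$ with $p_N$ a probability distribution on $\Pi(N)$. For $\pi\in\Pi(M)$, $i\notin M$, $B\in\pi$: $\pi_{+i\leadsto B}=(\pi\setminus\{B\})\cup\{B\cup\{i\}\}$ and $\pi_{+i\leadsto\emptyset}=\pi\cup\{\{i\}\}$. A TU game on $N$ is $v:2^N\to\mathbb{R}$ with $v(\emptyset)=0$; $v_{-i}$ denotes its restriction to subsets of $N\setminus\{i\}$. $\mathrm{Pot}$ is the potential for TU games: the unique map with value $0$ on the game with empty player set and $\sum_{i\in N}[\mathrm{Pot}(v)-\mathrm{Pot}(v_{-i})]=v(N)$; explicitly $\mathrm{Pot}(v)=\sum_{\emptyset\ne S\subseteq N}\frac{(s-1)!(n-s)!}{n!}v(S)$. *)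

theory Defs
  imports Complex_Main "HOL-Library.Disjoint_Sets"
begin

text \<open>Partitions of N: Pi(N) = {pi. partition_on N pi}; note partition_on {} {} holds.\<close>
definition Partitions :: "'a set \<Rightarrow> 'a set set set" where
  "Partitions N = {\<pi>. partition_on N \<pi>}"

definition random_partition :: "'a set \<Rightarrow> ('a set \<Rightarrow> 'a set set \<Rightarrow> real) \<Rightarrow> bool" where
  "random_partition U p \<longleftrightarrow>
     (\<forall>N. N \<subseteq> U \<longrightarrow> (\<forall>\<pi>\<in>Partitions N. p N \<pi> \<ge> 0) \<and> (\<Sum>\<pi>\<in>Partitions N. p N \<pi>) = 1)"

text \<open>A TU game on N: a function on subsets with v {} = 0 (values outside 2^N are irrelevant).\<close>
definition Pot :: "'a set \<Rightarrow> ('a set \<Rightarrow> real) \<Rightarrow> real" where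
  "Pot N v = (\<Sum>S\<in>{S. S \<subseteq> N \<and> S \<noteq> {}}.
      fact (card S - 1) * fact (card N - card S) / fact (card N) * v S)"

text \<open>pi_{+i ~> B}: add player i to block B, or as a singleton if B = {}.\<close>
definition join_block :: "'a set set \<Rightarrow> 'a \<Rightarrow> 'a set \<Rightarrow> 'a set set" where
  "join_block \<pi> i B = (if B = {} then insert {i} \<pi> else insert (insert i B) (\<pi> - {B}))"

definition generates_potential :: "'a set \<Rightarrow> ('a set \<Rightarrow> 'a set set \<Rightarrow> real) \<Rightarrow> bool" where
  "generates_potential U p \<longleftrightarrow>
     (\<forall>N v. N \<subseteq> U \<longrightarrow> v {} = 0 \<longrightarrow>
        (\<Sum>\<pi>\<in>Partitions N. p N \<pi> * (\<Sum>B\<in>\<pi>. v B)) = Pot N v)"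

definition block_prob_condition :: "'a set \<Rightarrow> ('a set \<Rightarrow> 'a set set \<Rightarrow> real) \<Rightarrow> bool" where
  "block_prob_condition U p \<longleftrightarrow>
     (\<forall>N T. N \<subseteq> U \<longrightarrow> T \<subseteq> N \<longrightarrow> T \<noteq> {} \<longrightarrow>
        (\<Sum>\<pi>\<in>{\<pi>\<in>Partitions N. T \<in> \<pi>}. p N \<pi>)
          = fact (card N - card T) * fact (card T - 1) / fact (card N))"

definition consistency_condition :: "'a set \<Rightarrow> ('a set \<Rightarrow> 'a set set \<Rightarrow> real) \<Rightarrow> bool" where
  "consistency_condition U p \<longleftrightarrow>
     (\<forall>N i S. N \<subseteq> U \<longrightarrow> i \<in> N \<longrightarrow> S \<subseteq> N - {i} \<longrightarrow> S \<noteq> {} \<longrightarrow>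
        (\<Sum>\<pi>\<in>Partitions ((N - {i}) - S). p (N - {i}) (insert S \<pi>))
          = real (card N) / real (card N - card S) *
            (\<Sum>\<pi>\<in>Partitions ((N - {i}) - S).
               \<Sum>B\<in>insert {} \<pi>. p N (insert S (join_block \<pi> i B))))"

end

theory Submission
  imports Defs
begin

definition bp :: "('a set \<Rightarrow> 'a set set \<Rightarrow> real) \<Rightarrow> 'a set \<Rightarrow> 'a set \<Rightarrow> real" where
  "bp p N T = (\<Sum>\<pi>\<in>{\<pi>\<in>Partitions N. T \<in> \<pi>}. p N \<pi>)"

lemma finite_Partitions: "finite N \<Longrightarrow> finite (Partitions N)"
  unfolding Partitions_def by (rule finitely_many_partition_on)

lemma Partitions_sub: "\<pi> \<in> Partitions N \<Longrightarrow> \<pi> \<subseteq> {T. T \<subseteq> N \<and> T \<noteq> {}}"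
  unfolding Partitions_def partition_on_def by auto

lemma swap_sum:
  fixes w :: "'a set set \<Rightarrow> real" and v :: "'a set \<Rightarrow> real"
  assumes "finite N"
  shows "(\<Sum>\<pi>\<in>Partitions N. w \<pi> * (\<Sum>B\<in>\<pi>. v B)) =
         (\<Sum>T\<in>{T. T \<subseteq> N \<and> T \<noteq> {}}. v T * (\<Sum>\<pi>\<in>{\<pi>\<in>Partitions N. T \<in> \<pi>}. w \<pi>))"
proof -
  let ?Ts = "{T. T \<subseteq> N \<and> T \<noteq> {}}"
  have fT: "finite ?Ts" using assms by simp
  have fP: "finite (Partitions N)" using assms finite_Partitions by blast
  have "(\<Sum>\<pi>\<in>Partitions N. w \<pi> * (\<Sum>B\<in>\<pi>. v B)) =
        (\<Sum>\<pi>\<in>Partitions N. \<Sum>T\<in>?Ts. (if T \<in> \<pi> then w \<pi> * v T else 0))"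
  proof (rule sum.cong[OF refl])
    fix \<pi> assume h: "\<pi> \<in> Partitions N"
    have e1: "(\<Sum>T\<in>?Ts. (if T \<in> \<pi> then w \<pi> * v T else 0)) = (\<Sum>T\<in>{T\<in>?Ts. T \<in> \<pi>}. w \<pi> * v T)"
      by (rule sum.inter_filter[OF fT, of "\<lambda>T. w \<pi> * v T" "\<lambda>T. T \<in> \<pi>", symmetric])
    have e2: "{T\<in>?Ts. T \<in> \<pi>} = \<pi>" using Partitions_sub[OF h] by blast
    have "w \<pi> * (\<Sum>B\<in>\<pi>. v B) = (\<Sum>B\<in>\<pi>. w \<pi> * v B)" by (simp add: sum_distrib_left)
    also have "\<dots> = (\<Sum>T\<in>?Ts. (if T \<in> \<pi> then w \<pi> * v T else 0))" unfolding e1 e2 ..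
    finally show "w \<pi> * (\<Sum>B\<in>\<pi>. v B) = (\<Sum>T\<in>?Ts. (if T \<in> \<pi> then w \<pi> * v T else 0))" .
  qed
  also have "\<dots> = (\<Sum>T\<in>?Ts. \<Sum>\<pi>\<in>Partitions N. (if T \<in> \<pi> then w \<pi> * v T else 0))"
    by (rule sum.swap)
  also have "\<dots> = (\<Sum>T\<in>?Ts. v T * (\<Sum>\<pi>\<in>{\<pi>\<in>Partitions N. T \<in> \<pi>}. w \<pi>))"
  proof (rule sum.cong[OF refl])
    fix T
    show "(\<Sum>\<pi>\<in>Partitions N. (if T \<in> \<pi> then w \<pi> * v T else 0)) = v T * (\<Sum>\<pi>\<in>{\<pi>\<in>Partitions N. T \<in> \<pi>}. w \<pi>)"
    proof -
      have "(\<Sum>\<pi>\<in>Partitions N. (if T \<in> \<pi> then w \<pi> * v T else 0)) = (\<Sum>\<pi>\<in>{\<pi>\<in>Partitions N. T \<in> \<pi>}. w \<pi> * v T)"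
        by (rule sum.inter_filter[OF fP, symmetric])
      also have "\<dots> = (\<Sum>\<pi>\<in>{\<pi>\<in>Partitions N. T \<in> \<pi>}. w \<pi>) * v T"
        by (rule sum_distrib_right[symmetric])
      finally show ?thesis by (simp only: mult.commute)
    qed
  qed
  finally show ?thesis .
qed

lemma sum_card_coef:
  assumes "finite N"
  shows "(\<Sum>T\<in>{T. T \<subseteq> N \<and> T \<noteq> {}}. real (card T) *
           (fact (card N - card T) * fact (card T - 1) / fact (card N))) = real (card N)"
proof -
  let ?Ts = "{T. T \<subseteq> N \<and> T \<noteq> {}}"
  let ?h = "\<lambda>T. real (card T) * (fact (card N - card T) * fact (card T - 1) / fact (card N) :: real)"
  have fT: "finite ?Ts" using assms by simp
  have img: "card ` ?Ts \<subseteq> {1..card N}"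
  proof
    fix k assume "k \<in> card ` ?Ts"
    then obtain T where T: "T \<subseteq> N" "T \<noteq> {}" "k = card T" by auto
    have "finite T" using T(1) assms finite_subset by blast
    then have "card T \<ge> 1" using T(2) by (simp add: Suc_le_eq card_gt_0_iff)
    moreover have "card T \<le> card N" using T(1) assms by (rule card_mono[rotated])
    ultimately show "k \<in> {1..card N}" using T(3) by simp
  qed
  have "(\<Sum>T\<in>?Ts. ?h T) = (\<Sum>k\<in>{1..card N}. sum ?h {x. x \<in> ?Ts \<and> card x = k})"
    using sum.group[OF fT _ img, of ?h] by simp
  also have "\<dots> = (\<Sum>k\<in>{1..card N}. 1)"
  proof (rule sum.cong[OF refl])
    fix k assume k: "k \<in> {1..card N}"
    have eq: "{x. x \<in> ?Ts \<and> card x = k} = {x. x \<subseteq> N \<and> card x = k}"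
      using k by auto
    have "sum ?h {x. x \<in> ?Ts \<and> card x = k} = sum (\<lambda>_. real k * (fact (card N - k) * fact (k - 1) / fact (card N))) {x. x \<subseteq> N \<and> card x = k}"
      unfolding eq by (rule sum.cong) auto
    also have "\<dots> = real (card N choose k) * (real k * (fact (card N - k) * fact (k - 1) / fact (card N)))"
      using n_subsets[OF assms, of k] by simp
    also have "\<dots> = 1"
    proof -
      have kk: "k \<le> card N" "k \<ge> 1" using k by auto
      have fk: "(fact k :: real) = real k * fact (k - 1)" using kk
        using fact_reduce[of k] by simp
      have k0: "real k \<noteq> 0" using kk by simp
      have "real (card N choose k) = fact (card N) / (fact k * fact (card N - k))"
        by (rule binomial_fact[OF kk(1)])
      then show ?thesis unfolding fk using k0
        by (simp add: divide_simps mult_ac)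
    qed
    finally show "sum ?h {x. x \<in> ?Ts \<and> card x = k} = 1" .
  qed
  finally show ?thesis by simp
qed

lemma part_insert_iff:
  assumes "disjnt S (\<Union>\<pi>)"
  shows "\<pi> \<in> Partitions (M - S) \<and> S \<subseteq> M \<and> S \<noteq> {} \<longleftrightarrow> insert S \<pi> \<in> Partitions M"
  using partition_on_insert[OF assms, of M] unfolding Partitions_def by auto

lemma sum_insert_block:
  assumes "finite M" "S \<subseteq> M" "S \<noteq> {}"
  shows "(\<Sum>\<pi>\<in>Partitions (M - S). f (insert S \<pi>)) = (\<Sum>\<sigma>\<in>{\<sigma>\<in>Partitions M. S \<in> \<sigma>}. f \<sigma>)"
proof (rule sum.reindex_bij_betw)
  show "bij_betw (insert S) (Partitions (M - S)) {\<sigma>\<in>Partitions M. S \<in> \<sigma>}"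
  proof (rule bij_betw_byWitness[where f'="\<lambda>\<sigma>. \<sigma> - {S}"])
    show "\<forall>a\<in>Partitions (M - S). insert S a - {S} = a"
    proof
      fix a assume "a \<in> Partitions (M - S)"
      then have "S \<notin> a" using Partitions_sub assms(2,3) by blast
      then show "insert S a - {S} = a" by simp
    qed
    show "\<forall>a'\<in>{\<sigma> \<in> Partitions M. S \<in> \<sigma>}. insert S (a' - {S}) = a'" by auto
    show "insert S ` Partitions (M - S) \<subseteq> {\<sigma> \<in> Partitions M. S \<in> \<sigma>}"
    proof
      fix x assume "x \<in> insert S ` Partitions (M - S)"
      then obtain a where a: "a \<in> Partitions (M - S)" "x = insert S a" by auto
      have "\<Union>a = M - S" using a(1) unfolding Partitions_def partition_on_def by auto
      then have "disjnt S (\<Union>a)" by (auto simp: disjnt_def)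
      then show "x \<in> {\<sigma> \<in> Partitions M. S \<in> \<sigma>}" using part_insert_iff[of S a M] a assms by auto
    qed
    show "(\<lambda>\<sigma>. \<sigma> - {S}) ` {\<sigma> \<in> Partitions M. S \<in> \<sigma>} \<subseteq> Partitions (M - S)"
    proof
      fix x assume "x \<in> (\<lambda>\<sigma>. \<sigma> - {S}) ` {\<sigma> \<in> Partitions M. S \<in> \<sigma>}"
      then obtain a where a: "a \<in> Partitions M" "S \<in> a" "x = a - {S}" by auto
      have "disjoint a" using a(1) unfolding Partitions_def partition_on_def by auto
      then have "disjnt S (\<Union>x)" using a(2,3) unfolding disjnt_def pairwise_def by auto
      moreover have "insert S x = a" using a by auto
      ultimately show "x \<in> Partitions (M - S)" using part_insert_iff[of S x M] a by auto
    qed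
  qed
qed

lemma join_part:
  assumes "\<pi> \<in> Partitions (M - {i})" "B \<in> insert {} \<pi>" "i \<in> M"
  shows "join_block \<pi> i B \<in> Partitions M"
proof (cases "B = {}")
  case True
  have "\<Union>\<pi> = M - {i}" using assms(1) unfolding Partitions_def partition_on_def by auto
  then have "disjnt {i} (\<Union>\<pi>)" by (auto simp: disjnt_def)
  then show ?thesis using part_insert_iff[of "{i}" \<pi> M] assms True by (auto simp: join_block_def)
next
  case False
  then have B: "B \<in> \<pi>" using assms(2) by auto
  have P: "partition_on (M - {i}) \<pi>" using assms(1) by (simp add: Partitions_def)
  have U: "\<Union>\<pi> = M - {i}" using P unfolding partition_on_def by auto
  have BM: "B \<subseteq> M - {i}" using B U by auto
  have dj: "disjnt B (\<Union>(\<pi> - {B}))" using P B unfolding partition_on_def disjnt_def pairwise_def by auto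
  have ins: "insert B (\<pi> - {B}) = \<pi>" using B by auto
  have P2: "(\<pi> - {B}) \<in> Partitions (M - {i} - B)"
    using part_insert_iff[OF dj, of "M - {i}"] ins assms(1) by auto
  have dj2: "disjnt (insert i B) (\<Union>(\<pi> - {B}))" using dj U by (auto simp: disjnt_def)
  have "M - insert i B = M - {i} - B" by auto
  then show ?thesis using part_insert_iff[OF dj2, of M] P2 BM assms(3) False
    by (auto simp: join_block_def)
qed

lemma join_blocks_with_i:
  assumes "\<pi> \<in> Partitions (M - {i})" "B \<in> insert {} \<pi>"
  shows "{X \<in> join_block \<pi> i B. i \<in> X} = {insert i B}"
    and "{X \<in> join_block \<pi> i B. i \<notin> X} = \<pi> - {B}"
proof -
  have sub: "\<And>X. X \<in> \<pi> \<Longrightarrow> i \<notin> X \<and> X \<noteq> {}" using Partitions_sub[OF assms(1)] by blast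
  show "{X \<in> join_block \<pi> i B. i \<in> X} = {insert i B}"
    using sub by (auto simp: join_block_def)
  show "{X \<in> join_block \<pi> i B. i \<notin> X} = \<pi> - {B}"
    using sub by (auto simp: join_block_def)
qed

lemma join_inj:
  assumes "\<pi> \<in> Partitions (M - {i})" "B \<in> insert {} \<pi>"
      and "\<pi>' \<in> Partitions (M - {i})" "B' \<in> insert {} \<pi>'"
      and "join_block \<pi> i B = join_block \<pi>' i B'"
  shows "\<pi> = \<pi>' \<and> B = B'"
proof -
  have "{insert i B} = {insert i B'}"
    using join_blocks_with_i(1)[OF assms(1,2)] join_blocks_with_i(1)[OF assms(3,4)] assms(5) by simp
  then have e1: "insert i B = insert i B'" by simp
  have "i \<notin> B" "i \<notin> B'" using assms(2,4) Partitions_sub[OF assms(1)] Partitions_sub[OF assms(3)] by auto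
  then have BB: "B = B'" using e1 by (metis insert_ident)
  have e2: "\<pi> - {B} = \<pi>' - {B}"
    using join_blocks_with_i(2)[OF assms(1,2)] join_blocks_with_i(2)[OF assms(3,4)] assms(5) BB by simp
  have ne: "{} \<notin> \<pi>" "{} \<notin> \<pi>'" using Partitions_sub[OF assms(1)] Partitions_sub[OF assms(3)] by auto
  have "\<pi> = \<pi>'"
  proof (cases "B = {}")
    case True then show ?thesis using e2 ne by auto
  next
    case False
    then have "B \<in> \<pi>" "B \<in> \<pi>'" using assms(2,4) BB by auto
    then show ?thesis using e2 by (metis insert_Diff)
  qed
  then show ?thesis using BB by simp
qed

lemma join_surj:
  assumes "\<tau> \<in> Partitions M" "i \<in> M"
  shows "\<exists>\<pi> B. \<pi> \<in> Partitions (M - {i}) \<and> B \<in> insert {} \<pi> \<and> \<tau> = join_block \<pi> i B"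
proof -
  have P: "partition_on M \<tau>" using assms(1) by (simp add: Partitions_def)
  then obtain C where C: "C \<in> \<tau>" "i \<in> C" using assms(2) unfolding partition_on_def by auto
  have dj: "disjnt C (\<Union>(\<tau> - {C}))" using P C unfolding partition_on_def disjnt_def pairwise_def by auto
  have ins: "insert C (\<tau> - {C}) = \<tau>" using C by auto
  have P2: "(\<tau> - {C}) \<in> Partitions (M - C)"
    using part_insert_iff[OF dj, of M] ins assms(1) by auto
  have CM: "C \<subseteq> M" using P C unfolding partition_on_def by auto
  show ?thesis
  proof (cases "C = {i}")
    case True
    have "M - C = M - {i}" using True by simp
    then have "\<tau> - {C} \<in> Partitions (M - {i})" using P2 by simp
    moreover have "\<tau> = join_block (\<tau> - {C}) i {}" using ins True by (simp add: join_block_def)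
    ultimately show ?thesis by blast
  next
    case False
    define B where "B = C - {i}"
    have Bne: "B \<noteq> {}" using False C(2) B_def by auto
    have djB: "disjnt B (\<Union>(\<tau> - {C}))" using dj B_def by (auto simp: disjnt_def)
    have "M - {i} - B = M - C" using B_def C(2) by auto
    then have "insert B (\<tau> - {C}) \<in> Partitions (M - {i})"
      using part_insert_iff[OF djB, of "M - {i}"] P2 Bne CM B_def by auto
    moreover have "B \<notin> \<tau> - {C}"
    proof
      assume "B \<in> \<tau> - {C}"
      then have "disjnt B B" using djB by (auto simp: disjnt_def)
      then show False using Bne by (simp add: disjnt_def)
    qed
    then have "\<tau> = join_block (insert B (\<tau> - {C})) i B"
      using ins Bne C(2) B_def by (auto simp: join_block_def)
    ultimately show ?thesis by blast
  qed
qed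

lemma sum_join:
  assumes "finite M" "i \<in> M"
  shows "(\<Sum>\<pi>\<in>Partitions (M - {i}). \<Sum>B\<in>insert {} \<pi>. g (join_block \<pi> i B)) = (\<Sum>\<tau>\<in>Partitions M. g \<tau>)"
proof -
  let ?A = "SIGMA \<pi>:Partitions (M - {i}). insert {} \<pi>"
  have fin: "finite (Partitions (M - {i}))" using assms finite_Partitions by blast
  have fin2: "finite (insert {} \<pi>)" if h: "\<pi> \<in> Partitions (M - {i})" for \<pi>
  proof -
    have "finite (M - {i})" using assms(1) by simp
    moreover have "partition_on (M - {i}) \<pi>" using h by (simp add: Partitions_def)
    ultimately have "finite \<pi>" by (rule finite_elements)
    then show ?thesis by simp
  qed
  have "(\<Sum>\<pi>\<in>Partitions (M - {i}). \<Sum>B\<in>insert {} \<pi>. g (join_block \<pi> i B)) =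
        (\<Sum>(\<pi>, B)\<in>?A. g (join_block \<pi> i B))"
    by (rule sum.Sigma[OF fin]) (intro ballI fin2)
  also have "\<dots> = (\<Sum>\<tau>\<in>Partitions M. g \<tau>)"
  proof -
    have bij: "bij_betw (\<lambda>(\<pi>, B). join_block \<pi> i B) ?A (Partitions M)"
      unfolding bij_betw_def
    proof
      show "inj_on (\<lambda>(\<pi>, B). join_block \<pi> i B) ?A"
      proof (rule inj_onI)
        fix x y assume x: "x \<in> ?A" and y: "y \<in> ?A"
          and e: "(\<lambda>(\<pi>, B). join_block \<pi> i B) x = (\<lambda>(\<pi>, B). join_block \<pi> i B) y"
        obtain a b where ab: "x = (a, b)" by fastforce
        obtain c d where cd: "y = (c, d)" by fastforce
        have xa: "a \<in> Partitions (M - {i})" "b \<in> insert {} a" using x ab by auto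
        have yc: "c \<in> Partitions (M - {i})" "d \<in> insert {} c" using y cd by auto
        have e': "join_block a i b = join_block c i d" using e ab cd by simp
        have "a = c \<and> b = d" by (rule join_inj[OF xa yc e'])
        then show "x = y" using ab cd by simp
      qed
      show "(\<lambda>(\<pi>, B). join_block \<pi> i B) ` ?A = Partitions M"
      proof
        show "(\<lambda>(\<pi>, B). join_block \<pi> i B) ` ?A \<subseteq> Partitions M"
        proof
          fix z assume "z \<in> (\<lambda>(\<pi>, B). join_block \<pi> i B) ` ?A"
          then obtain a b where ab: "a \<in> Partitions (M - {i})" "b \<in> insert {} a" "z = join_block a i b" by auto
          show "z \<in> Partitions M" unfolding ab(3) by (rule join_part[OF ab(1,2) assms(2)])
        qed
        show "Partitions M \<subseteq> (\<lambda>(\<pi>, B). join_block \<pi> i B) ` ?A"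
        proof
          fix \<tau> assume t: "\<tau> \<in> Partitions M"
          from join_surj[OF t assms(2)] obtain \<pi> B where "\<pi> \<in> Partitions (M - {i})" "B \<in> insert {} \<pi>" "\<tau> = join_block \<pi> i B"
            by blast
          then show "\<tau> \<in> (\<lambda>(\<pi>, B). join_block \<pi> i B) ` ?A"
            by (intro rev_image_eqI[where x="(\<pi>, B)"]) auto
        qed
      qed
    qed
    have "(\<Sum>x\<in>?A. g ((\<lambda>(\<pi>, B). join_block \<pi> i B) x)) = (\<Sum>\<tau>\<in>Partitions M. g \<tau>)"
      by (rule sum.reindex_bij_betw[OF bij])
    moreover have "(\<Sum>x\<in>?A. g ((\<lambda>(\<pi>, B). join_block \<pi> i B) x)) = (\<Sum>(\<pi>, B)\<in>?A. g (join_block \<pi> i B))"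
      by (rule sum.cong) auto
    ultimately show ?thesis by simp
  qed
  finally show ?thesis .
qed

lemma coef_step:
  assumes "s < n"
  shows "(fact (n - 1 - s) * fact (s - 1) / fact (n - 1) :: real)
       = real n / real (n - s) * (fact (n - s) * fact (s - 1) / fact n)"
proof -
  obtain m where m: "n = Suc (s + m)" using assms less_imp_Suc_add by blast
  have e1: "n - 1 - s = m" "n - s = Suc m" "n - 1 = s + m" using m by auto
  have f1: "(fact (n - s) :: real) = real (n - s) * fact (n - 1 - s)"
    unfolding e1 by simp
  have f2: "(fact n :: real) = real n * fact (n - 1)"
    unfolding m by simp
  have g: "\<And>a b A X B :: real. a \<noteq> 0 \<Longrightarrow> b \<noteq> 0 \<Longrightarrow> A * X / B = a / b * (b * A * X / (a * B))"
    by (simp add: field_simps)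
  have "real n \<noteq> 0" "real (n - s) \<noteq> 0" using assms by auto
  then show ?thesis unfolding f1 f2 using g by (simp add: mult.assoc)
qed

lemma gp_iff:
  assumes "finite U"
  shows "generates_potential U p \<longleftrightarrow> block_prob_condition U p"
proof
  assume G: "generates_potential U p"
  show "block_prob_condition U p"
    unfolding block_prob_condition_def
  proof (intro allI impI)
    fix N T assume N: "N \<subseteq> U" and T: "T \<subseteq> N" "T \<noteq> {}"
    have fN: "finite N" using N assms finite_subset by blast
    let ?v = "\<lambda>X. if X = T then 1 else (0::real)"
    have 0: "(\<Sum>\<pi>\<in>Partitions N. p N \<pi> * (\<Sum>B\<in>\<pi>. ?v B)) = Pot N ?v"
      using G N T unfolding generates_potential_def by auto
    have TT: "T \<in> {T. T \<subseteq> N \<and> T \<noteq> {}}" using T by auto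
    have fT: "finite {T. T \<subseteq> N \<and> T \<noteq> {}}" using fN by simp
    have "(\<Sum>\<pi>\<in>Partitions N. p N \<pi> * (\<Sum>B\<in>\<pi>. ?v B)) = (\<Sum>T'\<in>{T. T \<subseteq> N \<and> T \<noteq> {}}. ?v T' * bp p N T')"
      unfolding swap_sum[OF fN] bp_def ..
    also have "\<dots> = (\<Sum>T'\<in>{T. T \<subseteq> N \<and> T \<noteq> {}}. if T' = T then bp p N T' else 0)"
      by (rule sum.cong) auto
    also have "\<dots> = bp p N T" using sum.delta[OF fT, of T "bp p N"] TT by simp
    finally have 1: "(\<Sum>\<pi>\<in>Partitions N. p N \<pi> * (\<Sum>B\<in>\<pi>. ?v B)) = bp p N T" .
    have "Pot N ?v = (\<Sum>T'\<in>{T. T \<subseteq> N \<and> T \<noteq> {}}. if T' = T then fact (card T' - 1) * fact (card N - card T') / fact (card N) else 0)"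
      unfolding Pot_def by (rule sum.cong) auto
    also have "\<dots> = fact (card T - 1) * fact (card N - card T) / fact (card N)"
      using sum.delta[OF fT, of T "\<lambda>T'. fact (card T' - 1) * fact (card N - card T') / fact (card N)"] TT by simp
    finally have 2: "Pot N ?v = fact (card N - card T) * fact (card T - 1) / fact (card N)" by (simp add: mult.commute)
    from 0 1 2 show "(\<Sum>\<pi>\<in>{\<pi>\<in>Partitions N. T \<in> \<pi>}. p N \<pi>) = fact (card N - card T) * fact (card T - 1) / fact (card N)"
      unfolding bp_def by simp
  qed
next
  assume B: "block_prob_condition U p"
  show "generates_potential U p"
    unfolding generates_potential_def
  proof (intro allI impI)
    fix N and v :: "'a set \<Rightarrow> real" assume N: "N \<subseteq> U" and v: "v {} = 0"
    have fN: "finite N" using N assms finite_subset by blast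
    show "(\<Sum>\<pi>\<in>Partitions N. p N \<pi> * (\<Sum>B\<in>\<pi>. v B)) = Pot N v"
      unfolding swap_sum[OF fN] Pot_def
    proof (rule sum.cong[OF refl])
      fix T assume "T \<in> {T. T \<subseteq> N \<and> T \<noteq> {}}"
      then have "(\<Sum>\<pi>\<in>{\<pi>\<in>Partitions N. T \<in> \<pi>}. p N \<pi>) = fact (card N - card T) * fact (card T - 1) / fact (card N)"
        using B N unfolding block_prob_condition_def by auto
      then show "v T * (\<Sum>\<pi>\<in>{\<pi>\<in>Partitions N. T \<in> \<pi>}. p N \<pi>) =
          fact (card T - 1) * fact (card N - card T) / fact (card N) * v T"
        by simp
    qed
  qed
qed

lemma cons_sums:
  assumes "finite N" "i \<in> N" "S \<subseteq> N - {i}" "S \<noteq> {}"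
  shows "(\<Sum>\<pi>\<in>Partitions ((N - {i}) - S). p (N - {i}) (insert S \<pi>)) = bp p (N - {i}) S"
    and "(\<Sum>\<pi>\<in>Partitions ((N - {i}) - S). \<Sum>B\<in>insert {} \<pi>. p N (insert S (join_block \<pi> i B))) = bp p N S"
proof -
  show "(\<Sum>\<pi>\<in>Partitions ((N - {i}) - S). p (N - {i}) (insert S \<pi>)) = bp p (N - {i}) S"
    unfolding bp_def using assms by (intro sum_insert_block) auto
  have e: "N - {i} - S = (N - S) - {i}" by auto
  have "(\<Sum>\<pi>\<in>Partitions ((N - S) - {i}). \<Sum>B\<in>insert {} \<pi>. p N (insert S (join_block \<pi> i B)))
      = (\<Sum>\<tau>\<in>Partitions (N - S). p N (insert S \<tau>))"
    using assms by (intro sum_join) auto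
  also have "\<dots> = bp p N S"
    unfolding bp_def using assms by (intro sum_insert_block) auto
  finally show "(\<Sum>\<pi>\<in>Partitions ((N - {i}) - S). \<Sum>B\<in>insert {} \<pi>. p N (insert S (join_block \<pi> i B))) = bp p N S"
    unfolding e .
qed

lemma cons_iff:
  assumes "finite U"
  shows "consistency_condition U p \<longleftrightarrow>
    (\<forall>N i S. N \<subseteq> U \<longrightarrow> i \<in> N \<longrightarrow> S \<subseteq> N - {i} \<longrightarrow> S \<noteq> {} \<longrightarrow>
        bp p (N - {i}) S = real (card N) / real (card N - card S) * bp p N S)"
proof -
  have "\<And>N i S. N \<subseteq> U \<Longrightarrow> i \<in> N \<Longrightarrow> S \<subseteq> N - {i} \<Longrightarrow> S \<noteq> {} \<Longrightarrow>
     ((\<Sum>\<pi>\<in>Partitions ((N - {i}) - S). p (N - {i}) (insert S \<pi>))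
          = real (card N) / real (card N - card S) *
            (\<Sum>\<pi>\<in>Partitions ((N - {i}) - S).
               \<Sum>B\<in>insert {} \<pi>. p N (insert S (join_block \<pi> i B))))
     \<longleftrightarrow> (bp p (N - {i}) S = real (card N) / real (card N - card S) * bp p N S)"
  proof -
    fix N i S assume h: "N \<subseteq> U" "i \<in> N" "S \<subseteq> N - {i}" "S \<noteq> {}"
    have "finite N" using h(1) assms finite_subset by blast
    then show "?thesis N i S" using cons_sums[OF _ h(2-4)] by simp
  qed
  then show ?thesis unfolding consistency_condition_def by meson
qed

lemma block_card_sum:
  assumes "finite N" "\<pi> \<in> Partitions N"
  shows "(\<Sum>B\<in>\<pi>. real (card B)) = real (card N)"
proof -
  have P: "partition_on N \<pi>" using assms(2) by (simp add: Partitions_def)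
  have "card (\<Union>\<pi>) = sum card \<pi>"
  proof (rule card_Union_disjoint)
    show "pairwise disjnt \<pi>" using P by (simp add: partition_on_def)
    fix A assume "A \<in> \<pi>"
    then have "A \<subseteq> N" using P by (auto simp: partition_on_def)
    then show "finite A" using assms(1) finite_subset by blast
  qed
  moreover have "\<Union>\<pi> = N" using P by (simp add: partition_on_def)
  ultimately show ?thesis by (metis of_nat_sum)
qed

lemma iii_ii:
  assumes U: "finite U" and rp: "random_partition U p"
    and H: "\<forall>N i S. N \<subseteq> U \<longrightarrow> i \<in> N \<longrightarrow> S \<subseteq> N - {i} \<longrightarrow> S \<noteq> {} \<longrightarrow>
        bp p (N - {i}) S = real (card N) / real (card N - card S) * bp p N S"
  shows "N \<subseteq> U \<Longrightarrow> T \<subseteq> N \<Longrightarrow> T \<noteq> {} \<Longrightarrow>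
     bp p N T = fact (card N - card T) * fact (card T - 1) / fact (card N)"
proof (induction "card N" arbitrary: N T rule: less_induct)
  case less
  have fN: "finite N" using less.prems(1) U finite_subset by blast
  let ?c = "\<lambda>T. fact (card N - card T) * fact (card T - 1) / (fact (card N) :: real)"
  have proper: "bp p N T' = ?c T'" if T': "T' \<subseteq> N" "T' \<noteq> {}" "T' \<noteq> N" for T'
  proof -
    obtain i where i: "i \<in> N" "i \<notin> T'" using T' by blast
    have ct: "card T' < card N" using T' fN by (simp add: psubset_card_mono)
    have cNi: "card (N - {i}) = card N - 1" using i fN by simp
    have cpos: "card N > 0" using i fN by (auto simp: card_gt_0_iff)
    have "bp p (N - {i}) T' = fact (card (N - {i}) - card T') * fact (card T' - 1) / fact (card (N - {i}))"
    proof (rule less.hyps)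
      show "card (N - {i}) < card N" using cNi cpos by simp
      show "N - {i} \<subseteq> U" using less.prems(1) by blast
      show "T' \<subseteq> N - {i}" using T' i by blast
      show "T' \<noteq> {}" by fact
    qed
    also have "\<dots> = real (card N) / real (card N - card T') * ?c T'"
      unfolding cNi by (rule coef_step[OF ct])
    finally have a: "bp p (N - {i}) T' = real (card N) / real (card N - card T') * ?c T'" .
    have b: "bp p (N - {i}) T' = real (card N) / real (card N - card T') * bp p N T'"
    proof -
      have "T' \<subseteq> N - {i}" using T' i by blast
      then show ?thesis using H[rule_format, OF less.prems(1) i(1) _ T'(2)] by blast
    qed
    have z1: "real (card N - card T') \<noteq> 0" using ct by simp
    have z2: "real (card N) \<noteq> 0" using cpos by simp
    have nz: "real (card N) / real (card N - card T') \<noteq> 0" using z1 z2 by simp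
    have "real (card N) / real (card N - card T') * bp p N T' = real (card N) / real (card N - card T') * ?c T'"
      using a b by simp
    then show ?thesis by (rule mult_left_cancel[OF nz, THEN iffD1])
  qed
  show ?case
  proof (cases "T = N")
    case False then show ?thesis using proper less.prems by blast
  next
    case True
    let ?Ts = "{T. T \<subseteq> N \<and> T \<noteq> {}}"
    have NTs: "N \<in> ?Ts" using True less.prems by auto
    have fTs: "finite ?Ts" using fN by simp
    have "(\<Sum>\<pi>\<in>Partitions N. p N \<pi> * (\<Sum>B\<in>\<pi>. real (card B))) = (\<Sum>\<pi>\<in>Partitions N. p N \<pi> * real (card N))"
      using block_card_sum[OF fN] by simp
    also have "\<dots> = real (card N)"
      using rp less.prems(1) unfolding random_partition_def by (simp add: sum_distrib_right[symmetric])
    finally have "(\<Sum>T\<in>?Ts. real (card T) * bp p N T) = real (card N)"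
      unfolding swap_sum[OF fN] bp_def .
    also have "\<dots> = (\<Sum>T\<in>?Ts. real (card T) * ?c T)"
      using sum_card_coef[OF fN] by simp
    finally have eq: "(\<Sum>T\<in>?Ts. real (card T) * bp p N T) = (\<Sum>T\<in>?Ts. real (card T) * ?c T)" .
    have r: "(\<Sum>T\<in>?Ts - {N}. real (card T) * bp p N T) = (\<Sum>T\<in>?Ts - {N}. real (card T) * ?c T)"
      using proper by (intro sum.cong) auto
    have X: "real (card N) * bp p N N = real (card N) * ?c N"
      using eq unfolding sum.remove[OF fTs NTs] r by simp
    have z: "real (card N) \<noteq> 0" using fN NTs by (auto simp: card_gt_0_iff)
    have "bp p N N = ?c N" using X by (rule mult_left_cancel[OF z, THEN iffD1])
    then show ?thesis using True by simp
  qed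
qed

theorem proposition1:
  fixes U :: "'a set" and p :: "'a set \<Rightarrow> 'a set set \<Rightarrow> real"
  assumes "finite U" and "random_partition U p"
  shows "(generates_potential U p \<longleftrightarrow> block_prob_condition U p) \<and>
         (block_prob_condition U p \<longleftrightarrow> consistency_condition U p)"
proof
  show "generates_potential U p \<longleftrightarrow> block_prob_condition U p" by (rule gp_iff[OF assms(1)])
  have Bbp: "block_prob_condition U p \<longleftrightarrow> (\<forall>N T. N \<subseteq> U \<longrightarrow> T \<subseteq> N \<longrightarrow> T \<noteq> {} \<longrightarrow>
        bp p N T = fact (card N - card T) * fact (card T - 1) / fact (card N))"
    unfolding block_prob_condition_def bp_def ..
  show "block_prob_condition U p \<longleftrightarrow> consistency_condition U p"
  proof
    assume B: "block_prob_condition U p"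
    show "consistency_condition U p"
      unfolding cons_iff[OF assms(1)]
    proof (intro allI impI)
      fix N i S assume N: "N \<subseteq> U" and i: "i \<in> N" and S: "S \<subseteq> N - {i}" "S \<noteq> {}"
      have fN: "finite N" using N assms(1) finite_subset by blast
      have cS: "card S < card N" using S i fN by (intro psubset_card_mono) auto
      have cNi: "card (N - {i}) = card N - 1" using i fN by simp
      have B': "\<And>N T. N \<subseteq> U \<Longrightarrow> T \<subseteq> N \<Longrightarrow> T \<noteq> {} \<Longrightarrow>
        bp p N T = fact (card N - card T) * fact (card T - 1) / fact (card N)"
        using B unfolding Bbp by blast
      have NU: "N - {i} \<subseteq> U" using N by blast
      have SN: "S \<subseteq> N" using S by blast
      have "bp p (N - {i}) S = fact (card (N - {i}) - card S) * fact (card S - 1) / fact (card (N - {i}))"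
        by (rule B'[OF NU S])
      also have "\<dots> = real (card N) / real (card N - card S) * (fact (card N - card S) * fact (card S - 1) / fact (card N))"
        unfolding cNi by (rule coef_step[OF cS])
      also have "\<dots> = real (card N) / real (card N - card S) * bp p N S"
        using B'[OF N SN S(2)] by simp
      finally show "bp p (N - {i}) S = real (card N) / real (card N - card S) * bp p N S" .
    qed
  next
    assume C: "consistency_condition U p"
    have H: "\<forall>N i S. N \<subseteq> U \<longrightarrow> i \<in> N \<longrightarrow> S \<subseteq> N - {i} \<longrightarrow> S \<noteq> {} \<longrightarrow>
        bp p (N - {i}) S = real (card N) / real (card N - card S) * bp p N S"
      using C unfolding cons_iff[OF assms(1)] .
    show "block_prob_condition U p"
      unfolding Bbp
    proof (intro allI impI)
      fix N T assume "N \<subseteq> U" "T \<subseteq> N" "T \<noteq> {}"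
      then show "bp p N T = fact (card N - card T) * fact (card T - 1) / fact (card N)"
        by (rule iii_ii[OF assms H])
    qed
  qed
qed

end
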